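(* Let $(\mathcal{R},\le,r)$ be a triple as in the context satisfying Axioms A.1, A.2 and A.4 and the non-triviality assumption. Then for every $s\in\mathcal{AR}$ and every $X\in\mathcal{R}$ with $s\sqsubseteq X$ there exists $\alpha_s\in{}^*(\mathcal{AR}\restriction X)\setminus(\mathcal{AR}\restriction X)$ such that $\alpha_s\in{}^*\{t\in\mathcal{AR}_{|s|+1}:s\sqsubseteq t\}$ (i.e. $s\sqsubseteq\alpha_s\in{}^*\mathcal{AR}_{|s|+1}$).
   Context: Setting (Alpha-Theory of Benci–Di Nasso): ZFC together with a new symbol $\alpha$ satisfying: ($\alpha$1) every sequence $\varphi=\langle\varphi_i:i\in\mathbb{N}\rangle$ has a unique ideal value $\varphi[\alpha]$; ($\alpha$2) if $\varphi[\alpha]=\psi[\alpha]$ and $f\circ\varphi$, $f\circ\psi$ make sense then $(f\circ\varphi)[\alpha]=(f\circ\psi)[\alpha]$; ($\alpha$3) constant real sequences $r$ have ideal value $r$, and $\langle i\rangle$ has ideal value $\alpha\notin\mathbb{N}$; ($\alpha$4) if $\vartheta_i=\{\varphi_i,\psi_i\}$ then $\vartheta[\alpha]=\{\varphi[\alpha],\psi[\alpha]\}$; ($\alpha$5) the constant sequence $\emptyset$ has ideal value $\emptyset$, and for nonempty $\psi_i$, $\psi[\alpha]=\{\vartheta[\alpha]:\vartheta_i\in\psi_i\ \forall i\}$. ${}^*A$ is the ideal value of the constant sequence with value $A$. Abstract setting: $\mathcal{R}\neq\emptyset$, $\le$ a quasi-order on $\mathcal{R}$, $r$ a function on $\mathbb{N}\times\mathcal{R}$,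 $r_n(X)=r(n,X)$; $\mathcal{AR}$ = range of $r$; $\mathcal{AR}_n=\{r_n(X):X\in\mathcal{R}\}$; $\mathcal{AR}\restriction X=\{r_n(Y):n\in\mathbb{N},Y\in\mathcal{R},Y\le X\}$; $s\sqsubseteq X$ iff $s=r_n(X)$ for some $n$; $[s,X]=\{Y\in\mathcal{R}:s\sqsubseteq Y\le X\}$. A.1: (a) $r_0(X)=\emptyset$; (b) $X\neq Y\Rightarrow r_i(X)\neq r_i(Y)$ for some $i$; (c) $r_i(X)=r_j(Y)\Rightarrow i=j$ and $r_k(X)=r_k(Y)$ for $k<i$. $|s|$ is the unique $i$ with $s=r_i(X)$ for some $X$; $s\sqsubseteq t$ (for $s,t\in\mathcal{AR}$) iff $s=r_i(X)$, $t=r_j(X)$ for some $X$, $i\le j$ ($s\sqsubset t$ if $i<j$). A.2: a quasi-order $\le_{fin}$ on $\mathcal{AR}$ with (a) $\{t:t\le_{fin}s\}$ finite; (b) $X\le Y$ iff $\forall i\,\exists j\ r_i(X)\le_{fin}r_j(Y)$; (c) $s\sqsubseteq t\le_{fin}u\Rightarrow\exists v\sqsubseteq u\ s\le_{fin}v$. $\mathrm{depth}_X(s)$ = least $i$ with $s\le_{fin}r_i(X)$ ($\infty$ if none); $[\mathrm{depth}_X(s),X]=[r_i(X),X]$ for that $i$. For $n>|s|$, $r_n[s,X]=\{t\in\mathcal{AR}_n:s\sqsubset t,\ t\le_{fin}r_j(X)\text{ for some }j\}$. A.4: if $\mathrm{depth}_Y(s)<\infty$ and $\mathcal{O}\subseteq\mathcal{AR}_{|s|+1}$,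 there is $X\in[\mathrm{depth}_Y(s),Y]$ with $r_{|s|+1}[s,X]\subseteq\mathcal{O}$ or $r_{|s|+1}[s,X]\cap\mathcal{O}=\emptyset$. Non-triviality assumption: whenever $[s,X]\neq\emptyset$, $r_{|s|+1}[s,X]$ is infinite. *)

theory Defs
  imports Main
begin

(* ---------- Alpha-Theory, rendered via its ultrapower model ----------
   A model of Alpha-Theory is determined by the nonprincipal ultrafilter
   U = {A \<subseteq> \<nat>. \<alpha> \<in> *A}; the ideal value \<phi>[\<alpha>] of a sequence \<phi> is its
   U-class.  \<phi>[\<alpha>] \<in> *A  iff  {i. \<phi> i \<in> A} \<in> U, and \<phi>[\<alpha>] = a (standard)
   iff {i. \<phi> i = a} \<in> U. *)

definition free_ultrafilter_nat :: "nat filter \<Rightarrow> bool" where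
  "free_ultrafilter_nat U \<longleftrightarrow>
     U \<noteq> bot \<and> (\<forall>P. eventually P U \<or> eventually (\<lambda>i. \<not> P i) U)
     \<and> (\<forall>n. eventually (\<lambda>i. i \<noteq> n) U)"

definition star_in :: "nat filter \<Rightarrow> (nat \<Rightarrow> 'a) \<Rightarrow> 'a set \<Rightarrow> bool" where
  "star_in U \<phi> A \<longleftrightarrow> eventually (\<lambda>i. \<phi> i \<in> A) U"

definition standard_in :: "nat filter \<Rightarrow> (nat \<Rightarrow> 'a) \<Rightarrow> 'a set \<Rightarrow> bool" where
  "standard_in U \<phi> A \<longleftrightarrow> (\<exists>a\<in>A. eventually (\<lambda>i. \<phi> i = a) U)"

definition AR :: "(nat \<Rightarrow> 'r \<Rightarrow> 'b set) \<Rightarrow> 'b set set" where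
  "AR r = {r n X | n X. True}"

definition ARn :: "(nat \<Rightarrow> 'r \<Rightarrow> 'b set) \<Rightarrow> nat \<Rightarrow> 'b set set" where
  "ARn r n = {r n X | X. True}"

definition AR_restr :: "('r \<Rightarrow> 'r \<Rightarrow> bool) \<Rightarrow> (nat \<Rightarrow> 'r \<Rightarrow> 'b set) \<Rightarrow> 'r \<Rightarrow> 'b set set" where
  "AR_restr le r X = {r n Y | n Y. le Y X}"

definition init_seg :: "(nat \<Rightarrow> 'r \<Rightarrow> 'b set) \<Rightarrow> 'b set \<Rightarrow> 'r \<Rightarrow> bool" where
  "init_seg r s X \<longleftrightarrow> (\<exists>n. s = r n X)"

definition ar_le :: "(nat \<Rightarrow> 'r \<Rightarrow> 'b set) \<Rightarrow> 'b set \<Rightarrow> 'b set \<Rightarrow> bool" where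
  "ar_le r s t \<longleftrightarrow> (\<exists>X i j. s = r i X \<and> t = r j X \<and> i \<le> j)"

definition ar_less :: "(nat \<Rightarrow> 'r \<Rightarrow> 'b set) \<Rightarrow> 'b set \<Rightarrow> 'b set \<Rightarrow> bool" where
  "ar_less r s t \<longleftrightarrow> (\<exists>X i j. s = r i X \<and> t = r j X \<and> i < j)"

definition ar_len :: "(nat \<Rightarrow> 'r \<Rightarrow> 'b set) \<Rightarrow> 'b set \<Rightarrow> nat" where
  "ar_len r s = (THE i. \<exists>X. s = r i X)"

definition basic_set :: "('r \<Rightarrow> 'r \<Rightarrow> bool) \<Rightarrow> (nat \<Rightarrow> 'r \<Rightarrow> 'b set) \<Rightarrow> 'b set \<Rightarrow> 'r \<Rightarrow> 'r set" where
  "basic_set le r s X = {Y. init_seg r s Y \<and> le Y X}"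

(* depth_X(s) (only meaningful when finite, i.e. \<exists>i. lefin s (r i X)) *)
definition depth :: "('b set \<Rightarrow> 'b set \<Rightarrow> bool) \<Rightarrow> (nat \<Rightarrow> 'r \<Rightarrow> 'b set) \<Rightarrow> 'r \<Rightarrow> 'b set \<Rightarrow> nat" where
  "depth lefin r X s = (LEAST i. lefin s (r i X))"

definition rn_basic :: "('b set \<Rightarrow> 'b set \<Rightarrow> bool) \<Rightarrow> (nat \<Rightarrow> 'r \<Rightarrow> 'b set) \<Rightarrow> nat \<Rightarrow> 'b set \<Rightarrow> 'r \<Rightarrow> 'b set set" where
  "rn_basic lefin r n s X = {t \<in> ARn r n. ar_less r s t \<and> (\<exists>j. lefin t (r j X))}"

definition axiom_A1 :: "(nat \<Rightarrow> 'r \<Rightarrow> 'b set) \<Rightarrow> bool" where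
  "axiom_A1 r \<longleftrightarrow>
     (\<forall>X. r 0 X = {}) \<and>
     (\<forall>X Y. X \<noteq> Y \<longrightarrow> (\<exists>i. r i X \<noteq> r i Y)) \<and>
     (\<forall>i j X Y. r i X = r j Y \<longrightarrow> i = j \<and> (\<forall>k<i. r k X = r k Y))"

definition axiom_A2 :: "('r \<Rightarrow> 'r \<Rightarrow> bool) \<Rightarrow> (nat \<Rightarrow> 'r \<Rightarrow> 'b set) \<Rightarrow> ('b set \<Rightarrow> 'b set \<Rightarrow> bool) \<Rightarrow> bool" where
  "axiom_A2 le r lefin \<longleftrightarrow>
     (\<forall>s\<in>AR r. lefin s s) \<and>
     (\<forall>s\<in>AR r. \<forall>t\<in>AR r. \<forall>u\<in>AR r. lefin s t \<longrightarrow> lefin t u \<longrightarrow> lefin s u) \<and>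
     (\<forall>s\<in>AR r. finite {t \<in> AR r. lefin t s}) \<and>
     (\<forall>X Y. le X Y \<longleftrightarrow> (\<forall>i. \<exists>j. lefin (r i X) (r j Y))) \<and>
     (\<forall>s\<in>AR r. \<forall>t\<in>AR r. \<forall>u\<in>AR r. ar_le r s t \<longrightarrow> lefin t u \<longrightarrow>
         (\<exists>v. ar_le r v u \<and> lefin s v))"

definition axiom_A4 :: "('r \<Rightarrow> 'r \<Rightarrow> bool) \<Rightarrow> (nat \<Rightarrow> 'r \<Rightarrow> 'b set) \<Rightarrow> ('b set \<Rightarrow> 'b set \<Rightarrow> bool) \<Rightarrow> bool" where
  "axiom_A4 le r lefin \<longleftrightarrow>
     (\<forall>s\<in>AR r. \<forall>Y \<O>. (\<exists>i. lefin s (r i Y)) \<longrightarrow> \<O> \<subseteq> ARn r (ar_len r s + 1) \<longrightarrow>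
        (\<exists>X \<in> basic_set le r (r (depth lefin r Y s) Y) Y.
            rn_basic lefin r (ar_len r s + 1) s X \<subseteq> \<O> \<or>
            rn_basic lefin r (ar_len r s + 1) s X \<inter> \<O> = {}))"

definition nontrivial :: "('r \<Rightarrow> 'r \<Rightarrow> bool) \<Rightarrow> (nat \<Rightarrow> 'r \<Rightarrow> 'b set) \<Rightarrow> ('b set \<Rightarrow> 'b set \<Rightarrow> bool) \<Rightarrow> bool" where
  "nontrivial le r lefin \<longleftrightarrow>
     (\<forall>s\<in>AR r. \<forall>X. basic_set le r s X \<noteq> {} \<longrightarrow>
        infinite (rn_basic lefin r (ar_len r s + 1) s X))"

end

theory Submission
  imports Defs
begin

lemma len_eq:
  assumes A1: "axiom_A1 r" and "r i X = r j Y" shows "i = j"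
  using assms unfolding axiom_A1_def by blast

lemma pref_eq:
  assumes A1: "axiom_A1 r" and "r i X = r i Y" and "k \<le> i" shows "r k X = r k Y"
  using assms unfolding axiom_A1_def
  by (metis le_neq_implies_less)

lemma ar_len_r:
  assumes A1: "axiom_A1 r" shows "ar_len r (r n X) = n"
  unfolding ar_len_def
proof (rule the_equality)
  show "\<exists>Xa. r n X = r n Xa" by blast
next
  fix i assume "\<exists>Xa. r n X = r i Xa"
  then obtain Y where "r n X = r i Y" by blast
  then show "i = n" using len_eq[OF A1] by metis
qed

lemma lefin_refl:
  assumes A2: "axiom_A2 le r lefin" shows "lefin (r n X) (r n X)"
  using A2 unfolding axiom_A2_def AR_def by blast

lemma nodrop:
  assumes refl: "\<forall>X. le X X"
    and A1: "axiom_A1 r"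
    and A2: "axiom_A2 le r lefin"
    and A4: "axiom_A4 le r lefin"
    and NT: "nontrivial le r lefin"
  shows "\<forall>X d. d < k \<longrightarrow> \<not> lefin (r k X) (r d X)"
proof (induction k)
  case 0
  then show ?case by simp
next
  case (Suc m)
  show ?case
  proof (intro allI impI notI)
    fix X d assume dlt: "d < Suc m" and drop: "lefin (r (Suc m) X) (r d X)"
    have dep: "depth lefin r X (r m X) = m"
      unfolding depth_def
    proof (rule Least_equality)
      show "lefin (r m X) (r m X)" using lefin_refl[OF A2] .
    next
      fix y assume "lefin (r m X) (r y X)"
      then show "m \<le> y" using Suc.IH by (meson not_le)
    qed
    have len: "ar_len r (r m X) = m" using ar_len_r[OF A1] .
    have sAR: "r m X \<in> AR r" unfolding AR_def by blast
    have Osub: "{r (Suc m) X} \<subseteq> ARn r (ar_len r (r m X) + 1)"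
      unfolding ARn_def len by auto
    have ex: "\<exists>i. lefin (r m X) (r i X)" using lefin_refl[OF A2] by blast
    from A4 sAR ex Osub obtain X' where
      X'b: "X' \<in> basic_set le r (r (depth lefin r X (r m X)) X) X" and
      hom: "rn_basic lefin r (ar_len r (r m X) + 1) (r m X) X' \<subseteq> {r (Suc m) X} \<or>
            rn_basic lefin r (ar_len r (r m X) + 1) (r m X) X' \<inter> {r (Suc m) X} = {}"
      unfolding axiom_A4_def by blast
    from X'b dep obtain n where "r m X = r n X'" and leX': "le X' X"
      unfolding basic_set_def init_seg_def by auto
    then have eqm: "r m X' = r m X" using len_eq[OF A1] by metis
    have rd: "r d X' = r d X" using pref_eq[OF A1 eqm] dlt by simp
    have mem: "r (Suc m) X \<in> rn_basic lefin r (ar_len r (r m X) + 1) (r m X) X'"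
    proof -
      have "r (Suc m) X \<in> ARn r (m + 1)" unfolding ARn_def by auto
      moreover have "ar_less r (r m X) (r (Suc m) X)"
        unfolding ar_less_def by (intro exI[of _ X] exI[of _ m] exI[of _ "Suc m"]) simp
      moreover have "lefin (r (Suc m) X) (r d X')" using drop rd by simp
      ultimately show ?thesis unfolding rn_basic_def len by blast
    qed
    with hom have sub: "rn_basic lefin r (ar_len r (r m X) + 1) (r m X) X' \<subseteq> {r (Suc m) X}"
      by blast
    have "X' \<in> basic_set le r (r m X) X'"
      unfolding basic_set_def init_seg_def using eqm refl by auto
    then have "infinite (rn_basic lefin r (ar_len r (r m X) + 1) (r m X) X')"
      using NT sAR unfolding nontrivial_def by blast
    with sub show False using finite_subset by blast
  qed
qed

theorem mainTheorem19:
  fixes le :: "'r \<Rightarrow> 'r \<Rightarrow> bool"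
    and r :: "nat \<Rightarrow> 'r \<Rightarrow> 'b set"
    and lefin :: "'b set \<Rightarrow> 'b set \<Rightarrow> bool"
    and U :: "nat filter"
  assumes alpha: "free_ultrafilter_nat U"
    and refl: "\<forall>X. le X X"
    and trans: "\<forall>X Y Z. le X Y \<longrightarrow> le Y Z \<longrightarrow> le X Z"
    and A1: "axiom_A1 r"
    and A2: "axiom_A2 le r lefin"
    and A4: "axiom_A4 le r lefin"
    and NT: "nontrivial le r lefin"
    and s: "s \<in> AR r"
    and sX: "init_seg r s X"
  shows "\<exists>\<phi>. star_in U \<phi> (AR_restr le r X) \<and> \<not> standard_in U \<phi> (AR_restr le r X)
             \<and> star_in U \<phi> {t \<in> ARn r (ar_len r s + 1). ar_le r s t}"
proof -
  from sX obtain n where sn: "s = r n X" unfolding init_seg_def by blast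
  have len: "ar_len r s = n" using ar_len_r[OF A1] sn by simp
  have dep: "depth lefin r X s = n"
    unfolding depth_def sn
  proof (rule Least_equality)
    show "lefin (r n X) (r n X)" using lefin_refl[OF A2] .
  next
    fix y assume "lefin (r n X) (r y X)"
    then show "n \<le> y" using nodrop[OF refl A1 A2 A4 NT, of n] by (meson not_le)
  qed
  define T where "T = {t \<in> ARn r (ar_len r s + 1). ar_le r s t} \<inter> AR_restr le r X"
  have Tinf: "infinite T"
  proof
    assume fin: "finite T"
    have Osub: "T \<subseteq> ARn r (ar_len r s + 1)" unfolding T_def by auto
    have ex: "\<exists>i. lefin s (r i X)" using lefin_refl[OF A2] sn by blast
    from A4 s ex Osub obtain X' where
      X'b: "X' \<in> basic_set le r (r (depth lefin r X s) X) X" and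
      hom: "rn_basic lefin r (ar_len r s + 1) s X' \<subseteq> T \<or>
            rn_basic lefin r (ar_len r s + 1) s X' \<inter> T = {}"
      unfolding axiom_A4_def by blast
    from X'b dep obtain k where "r n X = r k X'" and leX': "le X' X"
      unfolding basic_set_def init_seg_def by auto
    then have eqn: "r n X' = s" using len_eq[OF A1] sn by metis
    have vT: "r (Suc n) X' \<in> T"
    proof -
      have "r (Suc n) X' \<in> ARn r (n + 1)" unfolding ARn_def by auto
      moreover have "ar_le r s (r (Suc n) X')"
        unfolding ar_le_def using eqn
        by (intro exI[of _ X'] exI[of _ n] exI[of _ "Suc n"]) simp
      moreover have "r (Suc n) X' \<in> AR_restr le r X"
        unfolding AR_restr_def using leX' by blast
      ultimately show ?thesis unfolding T_def len by blast
    qed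
    have vR: "r (Suc n) X' \<in> rn_basic lefin r (ar_len r s + 1) s X'"
    proof -
      have "r (Suc n) X' \<in> ARn r (n + 1)" unfolding ARn_def by auto
      moreover have "ar_less r s (r (Suc n) X')"
        unfolding ar_less_def using eqn
        by (intro exI[of _ X'] exI[of _ n] exI[of _ "Suc n"]) simp
      moreover have "lefin (r (Suc n) X') (r (Suc n) X')" using lefin_refl[OF A2] .
      ultimately show ?thesis unfolding rn_basic_def len by blast
    qed
    from hom vT vR have sub: "rn_basic lefin r (ar_len r s + 1) s X' \<subseteq> T" by blast
    have "X' \<in> basic_set le r s X'"
      unfolding basic_set_def init_seg_def using eqn refl by auto
    then have "infinite (rn_basic lefin r (ar_len r s + 1) s X')"
      using NT s unfolding nontrivial_def by blast
    with sub fin show False using finite_subset by blast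
  qed
  then obtain \<phi> :: "nat \<Rightarrow> 'b set" where inj: "inj \<phi>" and rng: "range \<phi> \<subseteq> T"
    using infinite_countable_subset by blast
  have U1: "U \<noteq> bot" and U3: "\<forall>n. eventually (\<lambda>i. i \<noteq> n) U"
    using alpha unfolding free_ultrafilter_nat_def by auto
  have st1: "star_in U \<phi> (AR_restr le r X)"
    unfolding star_in_def using rng T_def by (auto intro!: always_eventually)
  have st2: "star_in U \<phi> {t \<in> ARn r (ar_len r s + 1). ar_le r s t}"
    unfolding star_in_def using rng T_def by (auto intro!: always_eventually)
  have nst: "\<not> standard_in U \<phi> (AR_restr le r X)"
  proof
    assume "standard_in U \<phi> (AR_restr le r X)"
    then obtain a where ev: "eventually (\<lambda>i. \<phi> i = a) U"
      unfolding standard_in_def by blast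
    show False
    proof (cases "\<exists>m. \<phi> m = a")
      case True
      then obtain m where m: "\<phi> m = a" by blast
      have "eventually (\<lambda>i. \<phi> i = a \<and> i \<noteq> m) U"
        using eventually_conj[OF ev U3[rule_format, of m]] .
      moreover have "\<And>i. \<not> (\<phi> i = a \<and> i \<noteq> m)" using inj m by (metis injD)
      ultimately have "eventually (\<lambda>i. False) U" by simp
      then show False using U1 by (simp add: eventually_False)
    next
      case False
      then have "eventually (\<lambda>i. False) U" using ev by simp
      then show False using U1 by (simp add: eventually_False)
    qed
  qed
  show ?thesis using st1 st2 nst by blast
qed

end
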